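(* Let $a,b,c,k$ be nonnegative integers with $a+b+c\le k$, and let $\overleftrightarrow{G}$ be a finite directed ordered graph such that the largest right oriented ordered matching contained in $\overleftrightarrow{G}$ as a subgraph has size at most $a$, the largest left oriented ordered matching contained in it has size at most $b$, and the largest directed ordered matching contained in it has size at most $c$. Then $\chi(\overleftrightarrow{G})\le 2(a+b+c)+1$.
   Context: A directed ordered graph is a finite ordered graph (undirected simple graph with a linear order on its vertices) in which each edge $\{u,v\}$ is replaced by either one arc ($(u,v)$ or $(v,u)$) or both arcs. The right oriented ordered matching $M^R_t$ has vertices $a_1<b_1<\dots<a_t<b_t$ and arcs $(a_i,b_i)$; the left oriented ordered matching $M^L_t$ has the same vertices and arcs $(b_i,a_i)$; the directed ordered matching $M^D_t$ has the same vertices and both arcs $(a_i,b_i),(b_i,a_i)$ for each $i$. A directed ordered graph contains one of these as a subgraph if there is an injective order-preserving map of its vertices into $\overleftrightarrow{G}$ sending arcs to arcs. $\chi(\overleftrightarrow{G})$ denotes the minimum $n$ such that there is a map $f$ from the vertices of $\overleftrightarrow{G}$ to those of $\overleftrightarrow{K}_n$ (the complete ordered graph on $n$ vertices with all edges oriented both ways) with $f(u)\le f(v)$ whenever $u\le v$ and $(f(u),f(v))$ an arc whenever $(u,v)$ is an arc. *)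

theory Defs
  imports Main
begin

text \<open>Every edge of the underlying
  simple graph carries one or both arcs, so any loop-free arc set arises this way.\<close>
definition dir_ordered_graph :: "'a::linorder set \<Rightarrow> ('a \<times> 'a) set \<Rightarrow> bool" where
  "dir_ordered_graph V A \<longleftrightarrow> finite V \<and> A \<subseteq> V \<times> V \<and> (\<forall>v. (v, v) \<notin> A)"

text \<open>Containment of M^R_t, M^L_t, M^D_t: an order-preserving injection g of the vertices
  a_1 < b_1 < ... < a_t < b_t (indexed 0..2t-1, a_i = 2i, b_i = 2i+1) into V sending arcs to arcs.\<close>
definition contains_right_matching :: "'a::linorder set \<Rightarrow> ('a \<times> 'a) set \<Rightarrow> nat \<Rightarrow> bool" where
  "contains_right_matching V A t \<longleftrightarrow> (\<exists>g::nat \<Rightarrow> 'a. strict_mono_on {..<2*t} g \<and> g ` {..<2*t} \<subseteq> V \<and>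
     (\<forall>i<t. (g (2*i), g (2*i+1)) \<in> A))"

definition contains_left_matching :: "'a::linorder set \<Rightarrow> ('a \<times> 'a) set \<Rightarrow> nat \<Rightarrow> bool" where
  "contains_left_matching V A t \<longleftrightarrow> (\<exists>g::nat \<Rightarrow> 'a. strict_mono_on {..<2*t} g \<and> g ` {..<2*t} \<subseteq> V \<and>
     (\<forall>i<t. (g (2*i+1), g (2*i)) \<in> A))"

definition contains_directed_matching :: "'a::linorder set \<Rightarrow> ('a \<times> 'a) set \<Rightarrow> nat \<Rightarrow> bool" where
  "contains_directed_matching V A t \<longleftrightarrow> (\<exists>g::nat \<Rightarrow> 'a. strict_mono_on {..<2*t} g \<and> g ` {..<2*t} \<subseteq> V \<and>
     (\<forall>i<t. (g (2*i), g (2*i+1)) \<in> A \<and> (g (2*i+1), g (2*i)) \<in> A))"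

text \<open>Homomorphism into the complete ordered graph on vertices 0 < 1 < ... < m-1 with all
  edges oriented both ways (arcs: all (i,j) with i \<noteq> j).\<close>
definition hom_to_complete :: "'a::linorder set \<Rightarrow> ('a \<times> 'a) set \<Rightarrow> nat \<Rightarrow> ('a \<Rightarrow> nat) \<Rightarrow> bool" where
  "hom_to_complete V A m f \<longleftrightarrow> (\<forall>v\<in>V. f v < m) \<and> (\<forall>u\<in>V. \<forall>v\<in>V. u \<le> v \<longrightarrow> f u \<le> f v) \<and>
     (\<forall>(u, v)\<in>A. f u \<noteq> f v)"

definition ochi :: "'a::linorder set \<Rightarrow> ('a \<times> 'a) set \<Rightarrow> nat" where
  "ochi V A = (LEAST m. \<exists>f. hom_to_complete V A m f)"

end

theory Submission
  imports Defs
begin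

definition gen_match :: "'a::linorder set \<Rightarrow> ('a \<Rightarrow> 'a \<Rightarrow> bool) \<Rightarrow> nat \<Rightarrow> bool" where
  "gen_match W R t \<longleftrightarrow> (\<exists>g::nat \<Rightarrow> 'a. strict_mono_on {..<2*t} g \<and> g ` {..<2*t} \<subseteq> W \<and>
     (\<forall>i<t. R (g (2*i)) (g (2*i+1))))"

lemma gm_right: "contains_right_matching W A t = gen_match W (\<lambda>u v. (u,v) \<in> A) t"
  unfolding contains_right_matching_def gen_match_def by simp
lemma gm_left: "contains_left_matching W A t = gen_match W (\<lambda>u v. (v,u) \<in> A) t"
  unfolding contains_left_matching_def gen_match_def by simp
lemma gm_dir: "contains_directed_matching W A t = gen_match W (\<lambda>u v. (u,v) \<in> A \<and> (v,u) \<in> A) t"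
  unfolding contains_directed_matching_def gen_match_def by simp

lemma gm_zero: "gen_match W R 0"
  unfolding gen_match_def by (auto simp: strict_mono_on_def)

lemma gm_mono: "gen_match W R t \<Longrightarrow> W \<subseteq> V \<Longrightarrow> gen_match V R t"
  unfolding gen_match_def by blast

lemma gm_prepend:
  assumes "gen_match W' R t" "y < x" "\<forall>w\<in>W'. x < w" "x \<in> W" "y \<in> W" "W' \<subseteq> W" "R y x"
  shows "gen_match W R (Suc t)"
proof -
  obtain g where g: "strict_mono_on {..<2*t} g" "g ` {..<2*t} \<subseteq> W'" "\<forall>i<t. R (g(2*i)) (g(2*i+1))"
    using assms(1) unfolding gen_match_def by blast
  define h where "h = (\<lambda>i. if i = 0 then y else if i = 1 then x else g (i - 2))"
  have gx: "x < g k" if "k < 2*t" for k using g(2) assms(3) that by auto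
  have "strict_mono_on {..<2*Suc t} h"
  proof (rule strict_mono_onI)
    fix i j assume ij: "i \<in> {..<2*Suc t}" "j \<in> {..<2*Suc t}" "i < j"
    show "h i < h j"
    proof (cases "j = 1")
      case True
      then have "i = 0" using ij by auto
      then show ?thesis using True assms(2) by (simp add: h_def)
    next
      case False
      then have j2: "j \<ge> 2" using ij by auto
      have hj: "h j = g (j - 2)" using j2 by (simp add: h_def)
      have jl: "j - 2 < 2*t" using ij j2 by auto
      show ?thesis
      proof (cases "i < 2")
        case True
        then show ?thesis using hj gx[OF jl] assms(2) by (auto simp: h_def)
      next
        case False
        then have "h i = g (i - 2)" by (simp add: h_def)
        moreover have "g (i - 2) < g (j - 2)"
          using g(1) jl ij False by (intro strict_mono_onD[OF g(1)]) auto
        ultimately show ?thesis using hj by simp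
      qed
    qed
  qed
  moreover have "h ` {..<2*Suc t} \<subseteq> W"
  proof
    fix z assume "z \<in> h ` {..<2*Suc t}"
    then obtain i where i: "i < 2*Suc t" "z = h i" by auto
    show "z \<in> W"
    proof (cases "i < 2")
      case True then show ?thesis using i assms by (auto simp: h_def)
    next
      case False
      then have "i - 2 < 2*t" using i by auto
      then show ?thesis using i False g(2) assms(6) by (auto simp: h_def)
    qed
  qed
  moreover have "\<forall>i<Suc t. R (h (2*i)) (h (2*i+1))"
  proof (intro allI impI)
    fix i assume i: "i < Suc t"
    show "R (h (2*i)) (h (2*i+1))"
    proof (cases i)
      case 0 then show ?thesis using assms(7) by (simp add: h_def)
    next
      case (Suc k)
      then have "h (2*i) = g (2*k)" "h (2*i+1) = g (2*k+1)" by (simp_all add: h_def)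
      then show ?thesis using g(3) i Suc by auto
    qed
  qed
  ultimately show ?thesis unfolding gen_match_def by blast
qed

lemma main:
  assumes "finite W" "\<forall>v. (v,v) \<notin> A"
  shows "\<exists>f p q s. hom_to_complete W (A \<inter> W \<times> W) (2*(p+q+s)+1) f \<and>
    gen_match W (\<lambda>u v. (u,v) \<in> A) p \<and> gen_match W (\<lambda>u v. (v,u) \<in> A) q \<and>
    gen_match W (\<lambda>u v. (u,v) \<in> A \<and> (v,u) \<in> A) s"
  using assms(1)
proof (induction "card W" arbitrary: W rule: less_induct)
  case less
  define C where "C = {w \<in> W. \<exists>u\<in>W. u < w \<and> ((u,w) \<in> A \<or> (w,u) \<in> A)}"
  show ?case
  proof (cases "C = {}")
    case True
    have "hom_to_complete W (A \<inter> W \<times> W) (2*(0+0+0)+1) (\<lambda>_. 0)"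
      unfolding hom_to_complete_def
    proof (intro conjI ballI allI impI)
      fix e assume e: "e \<in> A \<inter> W \<times> W"
      obtain u v where uv: "e = (u,v)" by (cases e)
      have "u \<noteq> v" using e uv assms(2) by auto
      then have "u < v \<or> v < u" by auto
      then show "case e of (u, v) \<Rightarrow> (0::nat) \<noteq> 0"
        using True e uv unfolding C_def by auto
    qed auto
    then show ?thesis using gm_zero by blast
  next
    case False
    have fC: "finite C" using less.prems unfolding C_def by auto
    define x where "x = Min C"
    have xC: "x \<in> C" using False fC x_def by simp
    have xmin: "\<And>w. w \<in> C \<Longrightarrow> x \<le> w" using fC x_def by simp
    obtain y where y: "y \<in> W" "y < x" "(y,x) \<in> A \<or> (x,y) \<in> A" using xC unfolding C_def by auto
    have xW: "x \<in> W" using xC unfolding C_def by auto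
    define W2 where "W2 = {w \<in> W. x < w}"
    have W2sub: "W2 \<subseteq> W" unfolding W2_def by auto
    have "W2 \<subset> W" using W2sub xW unfolding W2_def by auto
    then have "card W2 < card W" using less.prems by (simp add: psubset_card_mono)
    moreover have "finite W2" using less.prems W2sub finite_subset by auto
    ultimately obtain f2 p q s where IH: "hom_to_complete W2 (A \<inter> W2 \<times> W2) (2*(p+q+s)+1) f2"
      "gen_match W2 (\<lambda>u v. (u,v) \<in> A) p" "gen_match W2 (\<lambda>u v. (v,u) \<in> A) q"
      "gen_match W2 (\<lambda>u v. (u,v) \<in> A \<and> (v,u) \<in> A) s"
      using less.hyps by blast
    define f where "f = (\<lambda>w. if w < x then 0 else if w = x then 1 else f2 w + 2)"
    have W2x: "\<forall>w\<in>W2. x < w" unfolding W2_def by auto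
    have indep: False if "u \<in> W" "v \<in> W" "u < v" "v < x" "(u,v) \<in> A \<or> (v,u) \<in> A" for u v
    proof -
      have "v \<in> C" using that unfolding C_def by auto
      then show False using xmin that by force
    qed
    have H: "hom_to_complete W (A \<inter> W \<times> W) (2*(p+q+s+1)+1) f"
      unfolding hom_to_complete_def
    proof (intro conjI ballI impI)
      fix v assume v: "v \<in> W"
      show "f v < 2*(p+q+s+1)+1"
      proof (cases "x < v")
        case True
        then have "v \<in> W2" using v unfolding W2_def by auto
        then have "f2 v < 2*(p+q+s)+1" using IH(1) unfolding hom_to_complete_def by auto
        then show ?thesis using True by (auto simp: f_def)
      qed (auto simp: f_def)
    next
      fix u v assume uv: "u \<in> W" "v \<in> W" "u \<le> v"
      show "f u \<le> f v"
      proof (cases "x < u")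
        case True
        then have "u \<in> W2" "v \<in> W2" using uv unfolding W2_def by auto
        then have "f2 u \<le> f2 v" using IH(1) uv unfolding hom_to_complete_def by auto
        then show ?thesis using True uv by (auto simp: f_def)
      qed (use uv in \<open>auto simp: f_def\<close>)
    next
      fix e assume e: "e \<in> A \<inter> W \<times> W"
      obtain u v where uv: "e = (u,v)" by (cases e)
      have uvW: "u \<in> W" "v \<in> W" "(u,v) \<in> A" using e uv by auto
      have ne: "u \<noteq> v" using uvW assms(2) by auto
      have "f u \<noteq> f v"
      proof (cases "x < u \<and> x < v")
        case True
        then have "u \<in> W2" "v \<in> W2" using uvW unfolding W2_def by auto
        then have "f2 u \<noteq> f2 v" using IH(1) uvW unfolding hom_to_complete_def by auto
        then show ?thesis using True by (auto simp: f_def)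
      next
        case False
        show ?thesis
        proof (cases "u < x \<and> v < x")
          case True
          then show ?thesis using indep[of u v] indep[of v u] uvW ne
            by (metis linorder_neqE)
        next
          case False
          then show ?thesis using \<open>\<not> (x < u \<and> x < v)\<close> ne
            by (auto simp: f_def)
        qed
      qed
      then show "case e of (u, v) \<Rightarrow> f u \<noteq> f v" using uv by simp
    qed
    have G: "gen_match W (\<lambda>u v. (u,v) \<in> A) p" "gen_match W (\<lambda>u v. (v,u) \<in> A) q"
      "gen_match W (\<lambda>u v. (u,v) \<in> A \<and> (v,u) \<in> A) s"
      using IH(2-4) gm_mono W2sub by blast+
    show ?thesis
    proof (cases "(y,x) \<in> A \<and> (x,y) \<in> A")
      case True
      have "gen_match W (\<lambda>u v. (u,v) \<in> A \<and> (v,u) \<in> A) (Suc s)"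
        by (rule gm_prepend[OF IH(4) y(2) W2x xW y(1) W2sub]) (use True in simp)
      then show ?thesis using H G by (intro exI[of _ f] exI[of _ p] exI[of _ q] exI[of _ "Suc s"]) auto
    next
      case F: False
      show ?thesis
      proof (cases "(y,x) \<in> A")
        case True
        have "gen_match W (\<lambda>u v. (u,v) \<in> A) (Suc p)"
          by (rule gm_prepend[OF IH(2) y(2) W2x xW y(1) W2sub]) (use True in simp)
        then show ?thesis using H G by (intro exI[of _ f] exI[of _ "Suc p"] exI[of _ q] exI[of _ s]) auto
      next
        case False
        then have "(x,y) \<in> A" using y(3) by auto
        then have "gen_match W (\<lambda>u v. (v,u) \<in> A) (Suc q)"
          by (intro gm_prepend[OF IH(3) y(2) W2x xW y(1) W2sub]) simp
        then show ?thesis using H G by (intro exI[of _ f] exI[of _ p] exI[of _ "Suc q"] exI[of _ s]) auto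
      qed
    qed
  qed
qed

theorem corollary2:
  fixes V :: "'a::linorder set" and A :: "('a \<times> 'a) set" and a b c k :: nat
  assumes "a + b + c \<le> k"
    and "dir_ordered_graph V A"
    and "\<forall>t. contains_right_matching V A t \<longrightarrow> t \<le> a"
    and "\<forall>t. contains_left_matching V A t \<longrightarrow> t \<le> b"
    and "\<forall>t. contains_directed_matching V A t \<longrightarrow> t \<le> c"
  shows "ochi V A \<le> 2 * (a + b + c) + 1"
proof -
  have fin: "finite V" and sub: "A \<subseteq> V \<times> V" and nl: "\<forall>v. (v,v) \<notin> A"
    using assms(2) unfolding dir_ordered_graph_def by auto
  obtain f p q s where M: "hom_to_complete V (A \<inter> V \<times> V) (2*(p+q+s)+1) f"
    "gen_match V (\<lambda>u v. (u,v) \<in> A) p" "gen_match V (\<lambda>u v. (v,u) \<in> A) q"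
    "gen_match V (\<lambda>u v. (u,v) \<in> A \<and> (v,u) \<in> A) s"
    using main[OF fin nl] by blast
  have "A \<inter> V \<times> V = A" using sub by auto
  with M(1) have h: "hom_to_complete V A (2*(p+q+s)+1) f" by simp
  have "p \<le> a" using assms(3) M(2) gm_right by blast
  moreover have "q \<le> b" using assms(4) M(3) gm_left by blast
  moreover have "s \<le> c" using assms(5) M(4) gm_dir by blast
  moreover have "ochi V A \<le> 2*(p+q+s)+1"
    unfolding ochi_def using h by (intro Least_le) blast
  ultimately show ?thesis
    by (meson add_le_mono add_le_mono1 le_trans mult_le_mono2)
qed

end
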